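(* Let $\mathcal U$ be a non-principal p-point ultrafilter on $\omega$ and let $\mathfrak I=\{\omega\setminus X\mid X\in\mathcal U\}$ be its dual ideal. Then the Grigorieff forcing $\mathbb P(\mathcal U)=\{p:\omega\to 2\mid \mathrm{dom}(p)\in\mathfrak I\}$, ordered by $q\le p$ iff $q\supseteq p$, does not satisfy Axiom A.
   Context: Here $p$ ranges over partial functions from $\omega$ to $2=\{0,1\}$. A partial order $(\mathbb P,\le)$ satisfies Axiom A if there are partial orders $\le_n$ ($n\in\omega$) on $\mathbb P$ such that: (i) $p\le_0 q$ implies $p\le q$; (ii) $p\le_{n+1}q$ implies $p\le_n q$; (iii) whenever $p_0\ge_0 p_1\ge_1 p_2\ge_2\cdots$ (a fusion sequence), there is $q\in\mathbb P$ with $q\le_n p_n$ for all $n$; (iv) for every $p\in\mathbb P$, every $n\in\omega$ and every $\mathbb P$-name $\dot\alpha$ for an ordinal, there are $q\le_n p$ and a countable set $B$ with $q\Vdash\dot\alpha\in B$. A p-point ultrafilter is a non-principal ultrafilter $\mathcal U$ on $\omega$ such that for every partition $\{J_n\mid n\in\omega\}$ of $\omega$ with each $J_n\notin\mathcal U$ there is $Y\in\mathcal U$ with $|Y\cap J_n|<\omega$ for all $n$. *)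

theory Defs
  imports Main "HOL-Library.Countable_Set"
begin

definition ultrafilter_on_nat :: "nat set set \<Rightarrow> bool" where
  "ultrafilter_on_nat U \<longleftrightarrow>
     UNIV \<in> U \<and> {} \<notin> U \<and>
     (\<forall>X Y. X \<in> U \<and> X \<subseteq> Y \<longrightarrow> Y \<in> U) \<and>
     (\<forall>X Y. X \<in> U \<and> Y \<in> U \<longrightarrow> X \<inter> Y \<in> U) \<and>
     (\<forall>X. X \<in> U \<or> - X \<in> U)"

definition principal_on_nat :: "nat set set \<Rightarrow> bool" where
  "principal_on_nat U \<longleftrightarrow> (\<exists>n. U = {X. n \<in> X})"

definition nonprincipal_ultrafilter :: "nat set set \<Rightarrow> bool" where
  "nonprincipal_ultrafilter U \<longleftrightarrow> ultrafilter_on_nat U \<and> \<not> principal_on_nat U"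

definition is_partition_of_nat :: "(nat \<Rightarrow> nat set) \<Rightarrow> bool" where
  "is_partition_of_nat J \<longleftrightarrow> (\<Union>n. J n) = UNIV \<and> (\<forall>m n. m \<noteq> n \<longrightarrow> J m \<inter> J n = {})"

definition p_point :: "nat set set \<Rightarrow> bool" where
  "p_point U \<longleftrightarrow> nonprincipal_ultrafilter U \<and>
     (\<forall>J. is_partition_of_nat J \<and> (\<forall>n. J n \<notin> U) \<longrightarrow>
        (\<exists>Y\<in>U. \<forall>n. finite (Y \<inter> J n)))"

definition dual_ideal :: "nat set set \<Rightarrow> nat set set" where
  "dual_ideal U = {UNIV - X | X. X \<in> U}"

definition grigorieff :: "nat set set \<Rightarrow> (nat \<rightharpoonup> bool) set" where
  "grigorieff U = {p. dom p \<in> dual_ideal U}"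

definition grig_le :: "(nat \<rightharpoonup> bool) \<Rightarrow> (nat \<rightharpoonup> bool) \<Rightarrow> bool" where
  "grig_le q p \<longleftrightarrow> p \<subseteq>\<^sub>m q"

text \<open>Axiom A (Baumgartner) for a partial order (P, le), where le q p means q \<le> p.
  Clause (iv) is stated in its combinatorial antichain form: for every antichain A,
  every p and n there is q \<le>_n p compatible with only countably many members of A.\<close>

definition partial_order_on' :: "'a set \<Rightarrow> ('a \<Rightarrow> 'a \<Rightarrow> bool) \<Rightarrow> bool" where
  "partial_order_on' P r \<longleftrightarrow>
     (\<forall>p\<in>P. r p p) \<and>
     (\<forall>p\<in>P. \<forall>q\<in>P. r p q \<and> r q p \<longrightarrow> p = q) \<and>
     (\<forall>p\<in>P. \<forall>q\<in>P. \<forall>s\<in>P. r p q \<and> r q s \<longrightarrow> r p s)"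

definition compatible_in :: "'a set \<Rightarrow> ('a \<Rightarrow> 'a \<Rightarrow> bool) \<Rightarrow> 'a \<Rightarrow> 'a \<Rightarrow> bool" where
  "compatible_in P le p q \<longleftrightarrow> (\<exists>r\<in>P. le r p \<and> le r q)"

definition antichain_in :: "'a set \<Rightarrow> ('a \<Rightarrow> 'a \<Rightarrow> bool) \<Rightarrow> 'a set \<Rightarrow> bool" where
  "antichain_in P le A \<longleftrightarrow> A \<subseteq> P \<and>
     (\<forall>a\<in>A. \<forall>b\<in>A. a \<noteq> b \<longrightarrow> \<not> compatible_in P le a b)"

definition axiom_A :: "'a set \<Rightarrow> ('a \<Rightarrow> 'a \<Rightarrow> bool) \<Rightarrow> bool" where
  "axiom_A P le \<longleftrightarrow>
    (\<exists>len :: nat \<Rightarrow> 'a \<Rightarrow> 'a \<Rightarrow> bool.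
       (\<forall>n. partial_order_on' P (len n)) \<and>
       (\<forall>p\<in>P. \<forall>q\<in>P. len 0 p q \<longrightarrow> le p q) \<and>
       (\<forall>n. \<forall>p\<in>P. \<forall>q\<in>P. len (Suc n) p q \<longrightarrow> len n p q) \<and>
       (\<forall>s :: nat \<Rightarrow> 'a. (\<forall>n. s n \<in> P) \<and> (\<forall>n. len n (s (Suc n)) (s n)) \<longrightarrow>
           (\<exists>q\<in>P. \<forall>n. len n q (s n))) \<and>
       (\<forall>p\<in>P. \<forall>n. \<forall>A. antichain_in P le A \<longrightarrow>
           (\<exists>q\<in>P. len n q p \<and> countable {a\<in>A. compatible_in P le q a})))"

end

theory Submission
  imports Defs "HOL-Library.Infinite_Set"
begin

lemma pow_uncountable:
  fixes W :: "nat set"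
  assumes inf: "infinite W"
  shows "\<not> countable (Pow W)"
proof
  assume c: "countable (Pow W)"
  have "Pow W \<noteq> {}" by auto
  define g where "g = from_nat_into (Pow W)"
  have g: "range g = Pow W" unfolding g_def using range_from_nat_into[OF \<open>Pow W \<noteq> {}\<close> c] .
  define e where "e = enumerate W"
  have inj: "inj e" unfolding e_def using inj_enumerate[OF inf] .
  have eW: "\<And>n. e n \<in> W" unfolding e_def using enumerate_in_set[OF inf] .
  define D where "D = {e n | n. e n \<notin> g n}"
  have "D \<in> Pow W" using eW unfolding D_def by auto
  then have "D \<in> range g" using g by simp
  then obtain m where m: "D = g m" by blast
  have "e m \<in> D \<longleftrightarrow> e m \<notin> g m"
    unfolding D_def using inj by (auto dest: injD)
  then show False using m by blast
qed

locale axA =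
  fixes U :: "nat set set" and len :: "nat \<Rightarrow> (nat \<rightharpoonup> bool) \<Rightarrow> (nat \<rightharpoonup> bool) \<Rightarrow> bool"
  assumes uf: "ultrafilter_on_nat U"
    and np: "\<not> principal_on_nat U"
    and po: "\<And>n. partial_order_on' (grigorieff U) (len n)"
    and l0: "\<forall>p\<in>grigorieff U. \<forall>q\<in>grigorieff U. len 0 p q \<longrightarrow> grig_le p q"
    and lS: "\<forall>n. \<forall>p\<in>grigorieff U. \<forall>q\<in>grigorieff U. len (Suc n) p q \<longrightarrow> len n p q"
    and fus: "\<forall>s :: nat \<Rightarrow> (nat \<rightharpoonup> bool). (\<forall>n. s n \<in> grigorieff U) \<and> (\<forall>n. len n (s (Suc n)) (s n)) \<longrightarrow>
           (\<exists>q\<in>grigorieff U. \<forall>n. len n q (s n))"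
    and anti: "\<forall>p\<in>grigorieff U. \<forall>n. \<forall>A. antichain_in (grigorieff U) grig_le A \<longrightarrow>
           (\<exists>q\<in>grigorieff U. len n q p \<and> countable {a\<in>A. compatible_in (grigorieff U) grig_le q a})"
begin

abbreviation "P \<equiv> grigorieff U"

lemma U_int: "A \<in> U \<Longrightarrow> B \<in> U \<Longrightarrow> A \<inter> B \<in> U"
  using uf unfolding ultrafilter_on_nat_def by blast
lemma U_mono: "A \<in> U \<Longrightarrow> A \<subseteq> B \<Longrightarrow> B \<in> U"
  using uf unfolding ultrafilter_on_nat_def by blast
lemma U_compl: "A \<notin> U \<Longrightarrow> - A \<in> U"
  using uf unfolding ultrafilter_on_nat_def by blast
lemma U_empty: "{} \<notin> U"
  using uf unfolding ultrafilter_on_nat_def by blast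
lemma U_UNIV: "UNIV \<in> U"
  using uf unfolding ultrafilter_on_nat_def by blast

lemma single_notin: "{x} \<notin> U"
proof
  assume x: "{x} \<in> U"
  have "U = {X. x \<in> X}"
  proof (intro set_eqI iffI)
    fix X assume "X \<in> U"
    then have "X \<inter> {x} \<in> U" using x U_int by blast
    then show "X \<in> {X. x \<in> X}" using U_empty by (cases "x \<in> X") auto
  next
    fix X assume "X \<in> {X. x \<in> X}"
    then show "X \<in> U" using x U_mono by auto
  qed
  then show False using np unfolding principal_on_nat_def by blast
qed

lemma finite_notin: "finite F \<Longrightarrow> F \<notin> U"
proof (induction F rule: finite_induct)
  case empty then show ?case using U_empty by simp
next
  case (insert x F)
  show ?case
  proof
    assume a: "insert x F \<in> U"
    have "- {x} \<inter> - F \<in> U" using U_compl single_notin insert.IH U_int by blast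
    then have "insert x F \<inter> (- {x} \<inter> - F) \<in> U" using a U_int by blast
    moreover have "insert x F \<inter> (- {x} \<inter> - F) = {}" by auto
    ultimately show False using U_empty by simp
  qed
qed

lemma inP: "p \<in> P \<longleftrightarrow> - dom p \<in> U"
  unfolding grigorieff_def dual_ideal_def
proof safe
  fix X assume "dom p = UNIV - X" "X \<in> U"
  then show "- dom p \<in> U" by (metis Compl_eq_Diff_UNIV double_compl)
next
  assume "- dom p \<in> U"
  then show "\<exists>X. dom p = UNIV - X \<and> X \<in> U" by (intro exI[of _ "- dom p"]) auto
qed

lemma len_refl: "p \<in> P \<Longrightarrow> len n p p"
  using po[of n] unfolding partial_order_on'_def by blast

lemma len_trans: "p \<in> P \<Longrightarrow> q \<in> P \<Longrightarrow> s \<in> P \<Longrightarrow> len n p q \<Longrightarrow> len n q s \<Longrightarrow> len n p s"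
  using po[of n] unfolding partial_order_on'_def by blast

lemma len_zero: "p \<in> P \<Longrightarrow> q \<in> P \<Longrightarrow> len n p q \<Longrightarrow> len 0 p q"
  proof (induction n)
  case (Suc n) then show ?case using lS by blast
qed simp

lemma len_le: "p \<in> P \<Longrightarrow> q \<in> P \<Longrightarrow> len n q p \<Longrightarrow> p \<subseteq>\<^sub>m q"
  using len_zero l0 unfolding grig_le_def by blast

lemma len_dom: "p \<in> P \<Longrightarrow> q \<in> P \<Longrightarrow> len n q p \<Longrightarrow> dom p \<subseteq> dom q"
  using len_le map_le_implies_dom_le by blast

lemma cover_modfin:
  assumes r: "r \<in> P" and X: "X \<notin> U"
  shows "\<exists>q\<in>P. len n q r \<and> finite (X - dom q)"
proof -
  define X' where "X' = X - dom r"
  define A where "A = {r ++ f | f. dom f = X'}"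
  have rU: "- dom r \<in> U" using r inP by blast
  have XU: "- X \<in> U" using X U_compl by blast
  have memA: "r ++ f \<in> P" if "dom f = X'" for f
  proof -
    have "- X \<inter> - dom r \<subseteq> - dom (r ++ f)" using that unfolding X'_def by auto
    then show ?thesis using U_int[OF XU rU] U_mono inP by blast
  qed
  have ac: "antichain_in P grig_le A"
    unfolding antichain_in_def
  proof (intro conjI ballI impI)
    show "A \<subseteq> P" using memA unfolding A_def by blast
  next
    fix a b assume a: "a \<in> A" and b: "b \<in> A" and ab: "a \<noteq> b"
    obtain f where f: "dom f = X'" "a = r ++ f" using a unfolding A_def by blast
    obtain g where g: "dom g = X'" "b = r ++ g" using b unfolding A_def by blast
    have "f \<noteq> g" using ab f g by blast
    then obtain x where x: "f x \<noteq> g x" by blast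
    then have "x \<in> dom f" using f g by (metis domIff)
    moreover have "x \<in> dom g" using \<open>x \<in> dom f\<close> f g by simp
    ultimately obtain u v where u: "f x = Some u" and v: "g x = Some v" by (meson domD)
    have uv: "u \<noteq> v" using x u v by simp
    show "\<not> compatible_in P grig_le a b"
    proof
      assume "compatible_in P grig_le a b"
      then obtain s where s: "a \<subseteq>\<^sub>m s" "b \<subseteq>\<^sub>m s" unfolding compatible_in_def grig_le_def by blast
      have "a x = Some u" "b x = Some v" using u v f g by simp_all
      then have "s x = Some u" "s x = Some v" using s unfolding map_le_def by (metis domI)+
      then show False using uv by simp
    qed
  qed
  have "\<exists>q\<in>P. len n q r \<and> countable {a\<in>A. compatible_in P grig_le q a}"
    by (rule anti[rule_format, OF r ac])
  then obtain q where q: "q \<in> P" "len n q r" and cnt: "countable {a\<in>A. compatible_in P grig_le q a}"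
    by blast
  have rq: "r \<subseteq>\<^sub>m q" using len_le r q by blast
  have qU: "- dom q \<in> U" using q inP by blast
  define W where "W = X' - dom q"
  have finW: "finite W"
  proof (rule ccontr)
    assume infW: "infinite W"
    define fZ where "fZ Z = (\<lambda>x. if x \<in> X' then (if x \<in> dom q then q x else Some (x \<in> Z)) else None)" for Z :: "nat set"
    define aZ where "aZ Z = r ++ fZ Z" for Z
    have domf: "dom (fZ Z) = X'" for Z unfolding fZ_def by (auto split: if_splits)
    have inA: "aZ Z \<in> A" for Z unfolding aZ_def A_def using domf by blast
    have comp: "compatible_in P grig_le q (aZ Z)" for Z
    proof -
      define s where "s = aZ Z ++ q"
      have ds: "dom s = dom q \<union> X' \<union> dom r" unfolding s_def aZ_def using domf[of Z] by auto
      have "- X \<inter> - dom r \<inter> - dom q \<subseteq> - dom s"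
        unfolding ds X'_def by (simp add: subset_iff)
      then have sP: "s \<in> P" using U_int[OF U_int[OF XU rU] qU] U_mono inP by blast
      have "q \<subseteq>\<^sub>m s" unfolding s_def by simp
      moreover have "aZ Z \<subseteq>\<^sub>m s"
        unfolding map_le_def
      proof
        fix x assume x: "x \<in> dom (aZ Z)"
        show "aZ Z x = s x"
        proof (cases "x \<in> dom q")
          case True
          then have sx: "s x = q x" unfolding s_def by (auto simp: map_add_def split: option.splits)
          show ?thesis
          proof (cases "x \<in> X'")
            case True
            then have "fZ Z x = q x" unfolding fZ_def using \<open>x \<in> dom q\<close> by simp
            moreover have "fZ Z x \<noteq> None" using True domf[of Z] by blast
            ultimately show ?thesis using sx unfolding aZ_def by (auto simp: map_add_def split: option.splits)
          next
            case False
            then have "fZ Z x = None" unfolding fZ_def by simp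
            then have ax: "aZ Z x = r x" unfolding aZ_def by (simp add: map_add_def)
            then have "x \<in> dom r" using x by (simp add: domIff)
            then have "r x = q x" using rq unfolding map_le_def by blast
            then show ?thesis using ax sx by simp
          qed
        next
          case False
          then show ?thesis unfolding s_def by (simp add: map_add_def domIff)
        qed
      qed
      ultimately show ?thesis unfolding compatible_in_def grig_le_def using sP by blast
    qed
    have aZx: "aZ Z x = Some (x \<in> Z)" if "x \<in> W" for Z x
    proof -
      have "x \<in> X'" "x \<notin> dom q" using that unfolding W_def by auto
      then have "fZ Z x = Some (x \<in> Z)" unfolding fZ_def by simp
      then show ?thesis unfolding aZ_def by simp
    qed
    have inj: "inj_on aZ (Pow W)"
    proof (rule inj_onI)
      fix Z1 Z2 assume Z: "Z1 \<in> Pow W" "Z2 \<in> Pow W" "aZ Z1 = aZ Z2"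
      show "Z1 = Z2"
      proof (rule set_eqI)
        fix x show "x \<in> Z1 \<longleftrightarrow> x \<in> Z2"
        proof (cases "x \<in> W")
          case True
          then show ?thesis using aZx[OF True, of Z1] aZx[OF True, of Z2] Z(3) by simp
        next
          case False then show ?thesis using Z by auto
        qed
      qed
    qed
    have "aZ ` Pow W \<subseteq> {a\<in>A. compatible_in P grig_le q a}" using inA comp by blast
    then have "countable (aZ ` Pow W)" using cnt countable_subset by blast
    then have "countable (Pow W)" using inj countable_image_inj_on by blast
    then show False using pow_uncountable infW by blast
  qed
  have "X - dom q \<subseteq> W" using rq unfolding W_def X'_def by (auto dest: map_le_implies_dom_le)
  then have "finite (X - dom q)" using finW finite_subset by blast
  then show ?thesis using q by blast
qed

lemma transversal:
  assumes r: "r \<in> P"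
  shows "\<exists>T. finite T \<and> (\<forall>F. F \<inter> T = {} \<longrightarrow> finite F \<longrightarrow> (\<exists>q\<in>P. len n q r \<and> F \<subseteq> dom q))"
proof -
  have key: "\<not> (\<forall>T. finite T \<longrightarrow> (\<exists>F. finite F \<and> F \<inter> T = {} \<and> \<not> (\<exists>q\<in>P. len n q r \<and> F \<subseteq> dom q)))"
  proof
  assume H: "\<forall>T. finite T \<longrightarrow> (\<exists>F. finite F \<and> F \<inter> T = {} \<and> \<not> (\<exists>q\<in>P. len n q r \<and> F \<subseteq> dom q))"
  define G where "G T = (SOME F. finite F \<and> F \<inter> T = {} \<and> \<not> (\<exists>q\<in>P. len n q r \<and> F \<subseteq> dom q))" for T
  have G: "finite (G T) \<and> G T \<inter> T = {} \<and> \<not> (\<exists>q\<in>P. len n q r \<and> G T \<subseteq> dom q)" if "finite T" for T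
  proof -
    have "\<exists>F. finite F \<and> F \<inter> T = {} \<and> \<not> (\<exists>q\<in>P. len n q r \<and> F \<subseteq> dom q)" by (rule H[rule_format, OF that])
    then show ?thesis unfolding G_def by (rule someI_ex)
  qed
  define Acc where "Acc = rec_nat {} (\<lambda>i A. A \<union> G A)"
  have Acc0: "Acc 0 = {}" unfolding Acc_def by simp
  have AccS: "Acc (Suc i) = Acc i \<union> G (Acc i)" for i unfolding Acc_def by simp
  have finA: "finite (Acc i)" for i
  proof (induction i)
    case 0 then show ?case using Acc0 by simp
  next
    case (Suc i) then show ?case using AccS G by simp
  qed
  define Fs where "Fs i = G (Acc i)" for i
  have Fs1: "finite (Fs i)" for i unfolding Fs_def using G[OF finA[of i]] by (rule conjunct1)
  have Fs2: "Fs i \<inter> Acc i = {}" for i unfolding Fs_def using G[OF finA[of i]] by (rule conjunct2[THEN conjunct1])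
  have Fs3: "\<not> (\<exists>q\<in>P. len n q r \<and> Fs i \<subseteq> dom q)" for i unfolding Fs_def using G[OF finA[of i]] by (rule conjunct2[THEN conjunct2])
  have ne: "Fs i \<noteq> {}" for i
  proof
    assume "Fs i = {}"
    then have "len n r r \<and> Fs i \<subseteq> dom r" using len_refl[OF r] by simp
    then have "\<exists>q\<in>P. len n q r \<and> Fs i \<subseteq> dom q" using r by (rule bexI)
    then show False using Fs3[of i] by contradiction
  qed
  have sub: "i < j \<Longrightarrow> Fs i \<subseteq> Acc j" for i j
  proof (induction j)
    case 0 then show ?case by simp
  next
    case (Suc j)
    then have "i < j \<or> i = j" by auto
    then show ?case
    proof
      assume "i < j" then show ?thesis using Suc.IH AccS by blast
    next
      assume "i = j" then show ?thesis using AccS Fs_def by blast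
    qed
  qed
  have disj: "Fs i \<inter> Fs j = {}" if "i \<noteq> j" for i j
  proof (cases "i < j")
    case True then show ?thesis using sub[OF True] Fs2[of j] by blast
  next
    case False then have "j < i" using that by simp
    then show ?thesis using sub[of j i] Fs2[of i] by blast
  qed
  define E where "E = (\<Union>i\<in>{i. even i}. Fs i)"
  define Od where "Od = (\<Union>i\<in>{i. odd i}. Fs i)"
  have EO: "E \<inter> Od = {}"
  proof (rule equals0I)
    fix x assume "x \<in> E \<inter> Od"
    then obtain i j where ij: "even i" "x \<in> Fs i" "odd j" "x \<in> Fs j" unfolding E_def Od_def by blast
    then have "i \<noteq> j" by auto
    then have "Fs i \<inter> Fs j = {}" by (rule disj)
    then show False using ij by blast
  qed
  have infE: "infinite {i::nat. even i}"
  proof -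
    have "\<exists>n>m. n \<in> {i::nat. even i}" for m by (rule exI[of _ "2*m+2"]) simp
    then show ?thesis unfolding infinite_nat_iff_unbounded by blast
  qed
  have infO: "infinite {i::nat. odd i}"
  proof -
    have "\<exists>n>m. n \<in> {i::nat. odd i}" for m by (rule exI[of _ "2*m+1"]) simp
    then show ?thesis unfolding infinite_nat_iff_unbounded by blast
  qed
  obtain S where S: "infinite S" "(\<Union>i\<in>S. Fs i) \<notin> U"
  proof (cases "E \<in> U")
    case True
    have "Od \<notin> U"
    proof
      assume "Od \<in> U"
      then have "E \<inter> Od \<in> U" using True U_int by blast
      then show False using EO U_empty by simp
    qed
    then show ?thesis using that[of "{i. odd i}"] infO unfolding Od_def by blast
  next
    case False
    then show ?thesis using that[of "{i. even i}"] infE unfolding E_def by blast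
  qed
  define X where "X = (\<Union>i\<in>S. Fs i)"
  obtain q where q: "q \<in> P" "len n q r" and fin: "finite (X - dom q)"
    using cover_modfin[OF r S(2)[folded X_def]] by blast
  define xi where "xi i = (SOME x. x \<in> Fs i - dom q)" for i
  have xi: "xi i \<in> Fs i - dom q" for i
  proof -
    have "\<not> Fs i \<subseteq> dom q"
    proof
      assume "Fs i \<subseteq> dom q"
      then have "\<exists>q\<in>P. len n q r \<and> Fs i \<subseteq> dom q" using q by (intro rev_bexI[of q]) auto
      then show False using Fs3[of i] by contradiction
    qed
    then have "\<exists>x. x \<in> Fs i - dom q" by blast
    then show ?thesis unfolding xi_def by (rule someI_ex)
  qed
  have "xi ` S \<subseteq> X - dom q" using xi unfolding X_def by blast
  then have "finite (xi ` S)" using fin finite_subset by blast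
  moreover have "inj_on xi S"
  proof (rule inj_onI)
    fix i j assume "i \<in> S" "j \<in> S" "xi i = xi j"
    show "i = j"
    proof (rule ccontr)
      assume "i \<noteq> j"
      then have "Fs i \<inter> Fs j = {}" by (rule disj)
      then show False using xi[of i] xi[of j] \<open>xi i = xi j\<close> by auto
    qed
  qed
  ultimately have "finite S" using finite_image_iff by blast
  then show False using S by blast
qed
  then show ?thesis by simp
qed

definition Tr :: "(nat \<rightharpoonup> bool) \<Rightarrow> nat \<Rightarrow> nat set" where
  "Tr r n = (SOME T. finite T \<and> (\<forall>F. F \<inter> T = {} \<longrightarrow> finite F \<longrightarrow> (\<exists>q\<in>P. len n q r \<and> F \<subseteq> dom q)))"

definition Cv :: "(nat \<rightharpoonup> bool) \<Rightarrow> nat \<Rightarrow> nat set \<Rightarrow> (nat \<rightharpoonup> bool)" where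
  "Cv r n F = (SOME q. q \<in> P \<and> len n q r \<and> F \<subseteq> dom q)"

lemma Tr: "r \<in> P \<Longrightarrow> finite (Tr r n) \<and> (\<forall>F. F \<inter> Tr r n = {} \<longrightarrow> finite F \<longrightarrow> (\<exists>q\<in>P. len n q r \<and> F \<subseteq> dom q))"
  unfolding Tr_def by (rule someI_ex[OF transversal])

lemma Cv:
  assumes "r \<in> P" "finite F" "F \<inter> Tr r n = {}"
  shows "Cv r n F \<in> P \<and> len n (Cv r n F) r \<and> F \<subseteq> dom (Cv r n F)"
proof -
  have "\<exists>q. q \<in> P \<and> len n q r \<and> F \<subseteq> dom q" using Tr[OF assms(1)] assms(2,3) by blast
  then show ?thesis unfolding Cv_def by (rule someI_ex)
qed

definition bnd :: "nat set \<Rightarrow> nat" where "bnd S = Suc (Max (insert 0 S))"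

lemma bnd: "finite S \<Longrightarrow> x \<in> S \<Longrightarrow> x < bnd S"
  unfolding bnd_def by (simp add: le_imp_less_Suc)

primrec ch :: "nat \<Rightarrow> (nat \<rightharpoonup> bool) \<times> (nat \<rightharpoonup> bool) \<times> nat set" where
  "ch 0 = (Map.empty, Map.empty, Tr Map.empty 0)"
| "ch (Suc k) = (let p = fst (ch k); p' = fst (snd (ch k)); S = snd (snd (ch k));
      q = Cv p k ({..<k + bnd S} - Tr p k);
      q' = Cv p' k ({..<k + bnd (S \<union> Tr q (Suc k))} - Tr p' k)
    in (q, q', S \<union> Tr q (Suc k) \<union> Tr q' (Suc k)))"

definition "pb k = fst (ch k)"
definition "pc k = fst (snd (ch k))"
definition "Sa k = snd (snd (ch k))"
definition "ta k = k + bnd (Sa k)"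
definition "tb k = k + bnd (Sa k \<union> Tr (pb (Suc k)) (Suc k))"

lemma pb0: "pb 0 = Map.empty" and pc0: "pc 0 = Map.empty" and Sa0: "Sa 0 = Tr Map.empty 0"
  unfolding pb_def pc_def Sa_def by simp_all

lemma pbS: "pb (Suc k) = Cv (pb k) k ({..<ta k} - Tr (pb k) k)"
  unfolding pb_def ta_def Sa_def by (simp add: Let_def)

lemma pcS: "pc (Suc k) = Cv (pc k) k ({..<tb k} - Tr (pc k) k)"
  unfolding pb_def pc_def tb_def Sa_def by (simp add: Let_def)

lemma SaS: "Sa (Suc k) = Sa k \<union> Tr (pb (Suc k)) (Suc k) \<union> Tr (pc (Suc k)) (Suc k)"
  unfolding pb_def pc_def Sa_def by (simp add: Let_def)

lemma empty_P: "Map.empty \<in> P"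
  using inP U_UNIV by simp

lemma inv: "pb k \<in> P \<and> pc k \<in> P \<and> finite (Sa k) \<and> Tr (pb k) k \<subseteq> Sa k \<and> Tr (pc k) k \<subseteq> Sa k"
proof (induction k)
  case 0
  then show ?case using pb0 pc0 Sa0 empty_P Tr[OF empty_P] by simp
next
  case (Suc k)
  then have I: "pb k \<in> P" "pc k \<in> P" "finite (Sa k)" by auto
  have b: "pb (Suc k) \<in> P" unfolding pbS by (rule Cv[OF I(1), THEN conjunct1]) auto
  have c: "pc (Suc k) \<in> P" unfolding pcS by (rule Cv[OF I(2), THEN conjunct1]) auto
  have "finite (Sa (Suc k))" unfolding SaS using I(3) Tr[OF b] Tr[OF c] by simp
  then show ?case using b c SaS by auto
qed

lemma stepb: "len k (pb (Suc k)) (pb k) \<and> {..<ta k} - Tr (pb k) k \<subseteq> dom (pb (Suc k))"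
  unfolding pbS using Cv[of "pb k" "{..<ta k} - Tr (pb k) k" k] inv[of k] by auto

lemma stepc: "len k (pc (Suc k)) (pc k) \<and> {..<tb k} - Tr (pc k) k \<subseteq> dom (pc (Suc k))"
  unfolding pcS using Cv[of "pc k" "{..<tb k} - Tr (pc k) k" k] inv[of k] by auto

lemma Sa_mono: "l \<le> k \<Longrightarrow> Sa l \<subseteq> Sa k"
proof (induction k)
  case 0 then show ?case by simp
next
  case (Suc k)
  then show ?case using SaS by (cases "l = Suc k") auto
qed

lemma contradiction: False
proof -
  obtain qb where qb: "qb \<in> P" "\<forall>n. len n qb (pb n)"
    using fus[rule_format, of pb] inv stepb by blast
  obtain qc where qc: "qc \<in> P" "\<forall>n. len n qc (pc n)"
    using fus[rule_format, of pc] inv stepc by blast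
  have db: "dom (pb n) \<subseteq> dom qb" for n using len_dom qb inv by blast
  have dc: "dom (pc n) \<subseteq> dom qc" for n using len_dom qc inv by blast
  define Y where "Y = - dom qb \<inter> - dom qc"
  have YU: "Y \<in> U" unfolding Y_def using qb qc inP U_int by blast
  have "Y \<subseteq> {..< max (ta 0) (tb 0)}"
  proof
    fix x assume xY: "x \<in> Y"
    show "x \<in> {..< max (ta 0) (tb 0)}"
    proof (rule ccontr)
      assume "x \<notin> {..< max (ta 0) (tb 0)}"
      then have x0: "ta 0 \<le> x" "tb 0 \<le> x" by auto
      have fA: "x \<in> Tr (pb k) k" if "x < ta k" for k
      proof (rule ccontr)
        assume "x \<notin> Tr (pb k) k"
        then have "x \<in> dom (pb (Suc k))" using stepb that by blast
        then show False using db xY unfolding Y_def by blast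
      qed
      have fB: "x \<in> Tr (pc k) k" if "x < tb k" for k
      proof (rule ccontr)
        assume "x \<notin> Tr (pc k) k"
        then have "x \<in> dom (pc (Suc k))" using stepc that by blast
        then show False using dc xY unfolding Y_def by blast
      qed
      have exA: "\<exists>i. x < ta i" by (rule exI[of _ "Suc x"]) (simp add: ta_def)
      have exB: "\<exists>i. x < tb i" by (rule exI[of _ "Suc x"]) (simp add: tb_def)
      define i where "i = (LEAST i. x < ta i)"
      define j where "j = (LEAST i. x < tb i)"
      have i1: "x < ta i" unfolding i_def by (rule LeastI_ex[OF exA])
      have i2: "\<not> x < ta l" if "l < i" for l using not_less_Least[of l "\<lambda>i. x < ta i"] that unfolding i_def by blast
      have j1: "x < tb j" unfolding j_def by (rule LeastI_ex[OF exB])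
      have j2: "\<not> x < tb l" if "l < j" for l using not_less_Least[of l "\<lambda>i. x < tb i"] that unfolding j_def by blast
      have "i \<noteq> 0" using i1 x0 by (metis not_less)
      then obtain i0 where i0: "i = Suc i0" using not0_implies_Suc by blast
      have "j \<noteq> 0" using j1 x0 by (metis not_less)
      then obtain j0 where j0: "j = Suc j0" using not0_implies_Suc by blast
      have xi: "x \<in> Tr (pb i) i" using fA i1 by blast
      have xj: "x \<in> Tr (pc j) j" using fB j1 by blast
      have xi0: "ta i0 \<le> x" using i2[of i0] i0 by simp
      have xj0: "tb j0 \<le> x" using j2[of j0] j0 by simp
      show False
      proof (cases "i \<le> j")
        case True
        have "x \<in> Sa j0 \<union> Tr (pb (Suc j0)) (Suc j0)"
        proof (cases "i = j")
          case True then show ?thesis using xi j0 by simp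
        next
          case False
          then have "i \<le> j0" using \<open>i \<le> j\<close> j0 by simp
          then have "Tr (pb i) i \<subseteq> Sa j0" using inv[of i] Sa_mono by blast
          then show ?thesis using xi by blast
        qed
        moreover have "finite (Sa j0 \<union> Tr (pb (Suc j0)) (Suc j0))"
          using inv[of j0] inv[of "Suc j0"] Tr[of "pb (Suc j0)" "Suc j0"] by simp
        ultimately have "x < tb j0" unfolding tb_def using bnd by (simp add: trans_less_add2)
        then show False using xj0 by simp
      next
        case False
        then have "j \<le> i0" using i0 by simp
        then have "Tr (pc j) j \<subseteq> Sa i0" using inv[of j] Sa_mono by blast
        then have "x \<in> Sa i0" using xj by blast
        then have "x < ta i0" unfolding ta_def using bnd inv by (simp add: trans_less_add2)
        then show False using xi0 by simp
      qed
    qed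
  qed
  then have "finite Y" using finite_subset by blast
  then show False using YU finite_notin by blast
qed

end

theorem theorem1:
  fixes U :: "nat set set"
  assumes "p_point U"
  shows "\<not> axiom_A (grigorieff U) grig_le"
proof
  assume A: "axiom_A (grigorieff U) grig_le"
  have uf: "ultrafilter_on_nat U" and np: "\<not> principal_on_nat U"
    using assms unfolding p_point_def nonprincipal_ultrafilter_def by simp_all
  obtain len :: "nat \<Rightarrow> (nat \<rightharpoonup> bool) \<Rightarrow> (nat \<rightharpoonup> bool) \<Rightarrow> bool" where
    h1: "\<forall>n. partial_order_on' (grigorieff U) (len n)" and
    h2: "\<forall>p\<in>grigorieff U. \<forall>q\<in>grigorieff U. len 0 p q \<longrightarrow> grig_le p q" and
    h3: "\<forall>n. \<forall>p\<in>grigorieff U. \<forall>q\<in>grigorieff U. len (Suc n) p q \<longrightarrow> len n p q" and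
    h4: "\<forall>s :: nat \<Rightarrow> (nat \<rightharpoonup> bool). (\<forall>n. s n \<in> grigorieff U) \<and> (\<forall>n. len n (s (Suc n)) (s n)) \<longrightarrow>
           (\<exists>q\<in>grigorieff U. \<forall>n. len n q (s n))" and
    h5: "\<forall>p\<in>grigorieff U. \<forall>n. \<forall>A. antichain_in (grigorieff U) grig_le A \<longrightarrow>
           (\<exists>q\<in>grigorieff U. len n q p \<and> countable {a\<in>A. compatible_in (grigorieff U) grig_le q a})"
    using A unfolding axiom_A_def by (elim exE conjE) (rule that)
  have h1': "\<And>n. partial_order_on' (grigorieff U) (len n)" using h1 by (rule spec)
  interpret axA U len by (rule axA.intro[OF uf np h1' h2 h3 h4 h5])
  show False by (rule contradiction)
qed

end
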